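(* Let $c>0$ and let $\nu,\tilde\nu$ be probability measures on $\mathbb R_+$, both different from $\boldsymbol d_0$, and let $\mu$ be the probability measure defined below. Then $$\mu(\{0\})=1-\min\bigl[\,1-\nu(\{0\}),\ c^{-1}(1-\tilde\nu(\{0\}))\,\bigr].$$
   Context: $\mathbb C_+=\{z:\Im z>0\}$, $\boldsymbol d_0$ is the Dirac mass at $0$. For $z\in\mathbb C_+$, the system $\delta = c\int \frac{t}{-z(1+\tilde\delta t)}\nu(dt)$, $\tilde\delta=\int\frac{t}{-z(1+\delta t)}\tilde\nu(dt)$ has a unique solution $(\delta(z),\tilde\delta(z))\in\mathbb C_+^2$, and $m(z)=\int\frac{1}{-z(1+\tilde\delta(z)t)}\nu(dt)$ is the Stieltjes transform $\int\frac{1}{t-z}\mu(dt)$ of a unique probability measure $\mu$ on $\mathbb R_+$. *)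

theory Defs
  imports "HOL-Probability.Probability"
begin

definition C_plus :: "complex set" where
  "C_plus = {z. Im z > 0}"

definition prob_on_Rplus :: "real measure \<Rightarrow> bool" where
  "prob_on_Rplus M \<longleftrightarrow> prob_space M \<and> sets M = sets borel \<and> measure M {..<0} = 0"

definition stieltjes :: "real measure \<Rightarrow> complex \<Rightarrow> complex" where
  "stieltjes M z = (\<integral>t. 1 / (complex_of_real t - z) \<partial>M)"

definition solves_system ::
  "real \<Rightarrow> real measure \<Rightarrow> real measure \<Rightarrow> (complex \<Rightarrow> complex) \<Rightarrow> (complex \<Rightarrow> complex) \<Rightarrow> bool" where
  "solves_system c \<nu> \<nu>' \<delta> \<delta>' \<longleftrightarrow>
     (\<forall>z\<in>C_plus. \<delta> z \<in> C_plus \<and> \<delta>' z \<in> C_plus \<and>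
        \<delta> z = complex_of_real c *
          (\<integral>t. complex_of_real t / (- z * (1 + \<delta>' z * complex_of_real t)) \<partial>\<nu>) \<and>
        \<delta>' z = (\<integral>t. complex_of_real t / (- z * (1 + \<delta> z * complex_of_real t)) \<partial>\<nu>'))"

definition m_fun :: "real measure \<Rightarrow> (complex \<Rightarrow> complex) \<Rightarrow> complex \<Rightarrow> complex" where
  "m_fun \<nu> \<delta>' z = (\<integral>t. 1 / (- z * (1 + \<delta>' z * complex_of_real t)) \<partial>\<nu>)"

end

theory Submission
  imports Defs
begin

lemma pt_nz:
  fixes w :: complex and t :: real
  assumes "Im w > 0" "t \<ge> 0"
  shows "1 + w * of_real t \<noteq> 0"
proof
  assume h: "1 + w * of_real t = 0"
  hence "Im (1 + w * of_real t) = 0" by simp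
  hence "Im w * t = 0" by simp
  hence "t = 0" using assms by simp
  with h show False by simp
qed

lemma pt_norm_ge1:
  fixes w :: complex and t :: real
  assumes "Re w \<ge> 0" "t \<ge> 0"
  shows "1 \<le> cmod (1 + w * of_real t)"
proof -
  have "1 \<le> Re (1 + w * of_real t)" using assms by simp
  also have "\<dots> \<le> cmod (1 + w * of_real t)" by (rule complex_Re_le_cmod)
  finally show ?thesis .
qed

lemma pt_norm_ge:
  fixes w :: complex and t :: real
  assumes "Re w \<ge> 0" "t \<ge> 0"
  shows "cmod w * t \<le> cmod (1 + w * of_real t)"
proof -
  have a: "0 \<le> Re w * t" using assms by simp
  have "(cmod w * t)^2 = (Re w * t)^2 + (Im w * t)^2"
    by (simp add: cmod_def power_mult_distrib algebra_simps)
  also have "\<dots> \<le> (1 + Re w * t)^2 + (Im w * t)^2"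
    using a by (simp add: power_mono)
  also have "\<dots> = (cmod (1 + w * of_real t))^2"
    by (simp add: cmod_def)
  finally show ?thesis using assms by (simp add: power2_le_iff_abs_le abs_le_iff)
qed

lemma pt_norm_le:
  fixes w :: complex and t :: real
  assumes "t \<ge> 0"
  shows "cmod (1 + w * of_real t) \<le> 1 + cmod w * t"
  using norm_triangle_ineq[of 1 "w * of_real t"] assms by (simp add: norm_mult)

lemma pt_Re_inv_nonneg:
  fixes w :: complex and t :: real
  assumes "Re w \<ge> 0" "t \<ge> 0"
  shows "0 \<le> Re (1 / (1 + w * of_real t))"
  using assms by (simp add: Re_divide)

lemma pt_Re_frac_ge:
  fixes w :: complex and t :: real
  assumes "Re w \<ge> 0" "t \<ge> 0" "Im w > 0"
  shows "t / (1 + cmod w * t)^2 \<le> Re (of_real t / (1 + w * of_real t))"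
proof -
  let ?q = "1 + w * of_real t"
  have nz: "?q \<noteq> 0" using pt_nz assms by blast
  have eq: "Re (of_real t / ?q) = t * Re ?q / (cmod ?q)^2"
    by (simp add: Re_divide cmod_def)
  have "Re ?q \<ge> 1" using assms by simp
  have pos: "(cmod ?q)^2 > 0" using nz by simp
  have "t / (1 + cmod w * t)^2 \<le> t / (cmod ?q)^2"
  proof (rule divide_left_mono)
    show "(cmod ?q)^2 \<le> (1 + cmod w * t)^2"
      using pt_norm_le[of t w] assms by (intro power_mono) auto
    have "0 < (1 + cmod w * t)" using assms by (simp add: add_pos_nonneg)
    thus "0 < (1 + cmod w * t)^2 * (cmod ?q)^2" using pos by simp
  qed (use assms in auto)
  also have "\<dots> \<le> t * Re ?q / (cmod ?q)^2"
    using \<open>Re ?q \<ge> 1\<close> assms pos by (intro divide_right_mono) (auto simp: mult_le_cancel_left1)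
  finally show ?thesis using eq by simp
qed

lemma pt_Re_system_nonneg:
  fixes v :: complex and t y :: real
  assumes "Im v > 0" "t \<ge> 0" "y > 0"
  shows "0 \<le> Re (of_real t / (- (\<i> * of_real y) * (1 + v * of_real t)))"
  using assms by (simp add: Re_divide algebra_simps)

definition psi :: "real measure \<Rightarrow> real \<Rightarrow> real" where
  "psi M r = (\<integral>t. indicator {0<..} t * min 1 (1 / (r * t)) \<partial>M)"

lemma AE_Rplus:
  assumes "prob_on_Rplus M"
  shows "AE t in M. t \<ge> 0"
proof -
  interpret prob_space M using assms unfolding prob_on_Rplus_def by auto
  have s: "sets M = sets borel" using assms unfolding prob_on_Rplus_def by auto
  have m: "{..<0::real} \<in> sets M" using s by simp
  have "emeasure M {..<0} = 0"
    using assms m unfolding prob_on_Rplus_def by (simp add: emeasure_eq_measure)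
  hence "{..<0::real} \<in> null_sets M" using m by auto
  from AE_not_in[OF this] show ?thesis by eventually_elim auto
qed

lemma dirac_if_AE:
  assumes "prob_on_Rplus M" "AE t in M. t = 0"
  shows "M = return borel 0"
proof -
  interpret prob_space M using assms unfolding prob_on_Rplus_def by auto
  have s: "sets M = sets borel" using assms unfolding prob_on_Rplus_def by auto
  show ?thesis
  proof (rule measure_eqI)
    show "sets M = sets (return borel 0)" using s by simp
    fix A assume "A \<in> sets M"
    hence A: "A \<in> sets borel" using s by simp
    show "emeasure M A = emeasure (return borel 0) A"
    proof (cases "(0::real) \<in> A")
      case True
      have "emeasure M A = emeasure M (space M)"
        by (rule emeasure_eq_AE) (use assms(2) True A s in \<open>auto\<close>)
      thus ?thesis using True A by (simp add: emeasure_space_1)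
    next
      case False
      have "emeasure M A = emeasure M {}"
        by (rule emeasure_eq_AE) (use assms(2) False A s in \<open>auto\<close>)
      thus ?thesis using False A by simp
    qed
  qed
qed

lemma Re_integral_nonneg:
  fixes f :: "'a \<Rightarrow> complex"
  assumes "AE x in M. 0 \<le> Re (f x)"
  shows "0 \<le> Re (integral\<^sup>L M f)"
proof (cases "integrable M f")
  case True
  hence "Re (integral\<^sup>L M f) = (\<integral>x. Re (f x) \<partial>M)" by simp
  also have "\<dots> \<ge> 0" by (rule integral_nonneg_AE) (rule assms)
  finally show ?thesis by simp
next
  case False thus ?thesis by (simp add: not_integrable_integral_eq)
qed

lemma Re_sys_nonneg:
  assumes "prob_on_Rplus M" "Im v > 0" "y > 0"
  shows "0 \<le> Re (\<integral>t. complex_of_real t / (- (\<i> * of_real y) * (1 + v * complex_of_real t)) \<partial>M)"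
proof (rule Re_integral_nonneg)
  show "AE t in M. 0 \<le> Re (complex_of_real t / (- (\<i> * of_real y) * (1 + v * complex_of_real t)))"
    using AE_Rplus[OF assms(1)] by eventually_elim (rule pt_Re_system_nonneg, use assms in auto)
qed

lemma mult_out:
  fixes z :: complex and g h :: "real \<Rightarrow> complex"
  assumes "z \<noteq> 0"
  shows "- z * (\<integral>t. g t / (- z * h t) \<partial>M) = (\<integral>t. g t / h t \<partial>M)"
proof -
  have "- z * (\<integral>t. g t / (- z * h t) \<partial>M) = (\<integral>t. - z * (g t / (- z * h t)) \<partial>M)"
    by (rule integral_mult_right_zero[symmetric])
  also have "\<dots> = (\<integral>t. g t / h t \<partial>M)"
  proof (intro Bochner_Integration.integral_cong refl)
    fix t
    show "- z * (g t / (- z * h t)) = g t / h t"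
      using assms by (cases "h t = 0") (auto simp: field_simps)
  qed
  finally show ?thesis .
qed

lemma int_facts:
  fixes w :: complex
  assumes P: "prob_on_Rplus M" and w: "Re w \<ge> 0" "Im w > 0"
  shows int1: "integrable M (\<lambda>t. 1 / (1 + w * complex_of_real t))"
    and int2: "integrable M (\<lambda>t. complex_of_real t / (1 + w * complex_of_real t))"
    and ident: "w * (\<integral>t. complex_of_real t / (1 + w * complex_of_real t) \<partial>M)
                 = 1 - (\<integral>t. 1 / (1 + w * complex_of_real t) \<partial>M)"
    and lower: "measure M {0} \<le> Re (\<integral>t. 1 / (1 + w * complex_of_real t) \<partial>M)"
    and upper: "Re (\<integral>t. 1 / (1 + w * complex_of_real t) \<partial>M) \<le> measure M {0} + psi M (cmod w)"
    and frac: "\<And>R. cmod w \<le> R \<Longrightarrow>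
        (\<integral>t. t / (1 + R * t)^2 \<partial>M) \<le> Re (\<integral>t. complex_of_real t / (1 + w * complex_of_real t) \<partial>M)"
proof -
  interpret prob_space M using P unfolding prob_on_Rplus_def by auto
  have s[measurable_cong]: "sets M = sets borel" using P unfolding prob_on_Rplus_def by auto
  have AE0: "AE t in M. t \<ge> 0" by (rule AE_Rplus[OF P])
  have sp: "space M = UNIV" using sets_eq_imp_space_eq[OF s] by simp
  have i0: "integrable M (indicator {0::real} :: real \<Rightarrow> real)" by (rule integrable_real_indicator) (auto simp: s emeasure_eq_measure)
  have wpos: "cmod w > 0" using w by (auto simp: cmod_def intro!: add_nonneg_pos)
  show i1: "integrable M (\<lambda>t. 1 / (1 + w * complex_of_real t))"
  proof (rule Bochner_Integration.integrable_bound[where f="\<lambda>_. 1::real"])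
    show "integrable M (\<lambda>_. 1::real)" by simp
    show "(\<lambda>t. 1 / (1 + w * complex_of_real t)) \<in> borel_measurable M" by measurable
    show "AE t in M. norm (1 / (1 + w * complex_of_real t)) \<le> norm (1::real)"
      using AE0 by eventually_elim (use pt_norm_ge1 w in \<open>auto simp: norm_divide divide_le_eq\<close>)
  qed
  show i2: "integrable M (\<lambda>t. complex_of_real t / (1 + w * complex_of_real t))"
  proof (rule Bochner_Integration.integrable_bound[where f="\<lambda>_. 1 / cmod w"])
    show "integrable M (\<lambda>_. 1 / cmod w)" by simp
    show "(\<lambda>t. complex_of_real t / (1 + w * complex_of_real t)) \<in> borel_measurable M" by measurable
    show "AE t in M. norm (complex_of_real t / (1 + w * complex_of_real t)) \<le> norm (1 / cmod w)"
      using AE0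
    proof eventually_elim
      fix t :: real assume t: "0 \<le> t"
      show "norm (complex_of_real t / (1 + w * complex_of_real t)) \<le> norm (1 / cmod w)"
      proof (cases "t = 0")
        case True thus ?thesis by simp
      next
        case False
        hence tp: "t > 0" using t by simp
        have "cmod w * t \<le> cmod (1 + w * complex_of_real t)" by (rule pt_norm_ge) (use w t in auto)
        moreover have "cmod w * t > 0" using wpos tp by simp
        ultimately show ?thesis using tp wpos
          by (simp add: norm_divide divide_le_eq field_simps)
      qed
    qed
  qed
  have "w * (\<integral>t. complex_of_real t / (1 + w * complex_of_real t) \<partial>M)
        = (\<integral>t. w * (complex_of_real t / (1 + w * complex_of_real t)) \<partial>M)"
    by (rule integral_mult_right_zero[symmetric])
  also have "\<dots> = (\<integral>t. 1 - 1 / (1 + w * complex_of_real t) \<partial>M)"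
  proof (rule integral_cong_AE)
    show "(\<lambda>t. w * (complex_of_real t / (1 + w * complex_of_real t))) \<in> borel_measurable M" by measurable
    show "(\<lambda>t. 1 - 1 / (1 + w * complex_of_real t)) \<in> borel_measurable M" by measurable
    show "AE t in M. w * (complex_of_real t / (1 + w * complex_of_real t)) = 1 - 1 / (1 + w * complex_of_real t)"
      using AE0 by eventually_elim (use pt_nz[of w] w in \<open>auto simp: field_simps\<close>)
  qed
  also have "\<dots> = 1 - (\<integral>t. 1 / (1 + w * complex_of_real t) \<partial>M)"
    using i1 by (subst Bochner_Integration.integral_diff) (auto simp: prob_space)
  finally show "w * (\<integral>t. complex_of_real t / (1 + w * complex_of_real t) \<partial>M)
                 = 1 - (\<integral>t. 1 / (1 + w * complex_of_real t) \<partial>M)" .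
  have ReI: "Re (\<integral>t. 1 / (1 + w * complex_of_real t) \<partial>M) = (\<integral>t. Re (1 / (1 + w * complex_of_real t)) \<partial>M)"
    using i1 by simp
  have "measure M {0} = (\<integral>t. indicator {0} t \<partial>M)" by (simp add: sp)
  also have "\<dots> \<le> (\<integral>t. Re (1 / (1 + w * complex_of_real t)) \<partial>M)"
  proof (rule integral_mono_AE)
    show "integrable M (indicator {0::real} :: real \<Rightarrow> real)" by (rule i0)
    show "integrable M (\<lambda>t. Re (1 / (1 + w * complex_of_real t)))" using i1 by simp
    show "AE t in M. indicator {0} t \<le> Re (1 / (1 + w * complex_of_real t))"
      using AE0 by eventually_elim (use pt_Re_inv_nonneg w in \<open>auto simp: indicator_def\<close>)
  qed
  finally show "measure M {0} \<le> Re (\<integral>t. 1 / (1 + w * complex_of_real t) \<partial>M)" using ReI by simp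
  have ip: "integrable M (\<lambda>t. indicator {0<..} t * min 1 (1 / (cmod w * t)))"
  proof (rule Bochner_Integration.integrable_bound[where f="\<lambda>_. 1::real"])
    show "integrable M (\<lambda>_. 1::real)" by simp
    show "(\<lambda>t. indicator {0<..} t * min 1 (1 / (cmod w * t))) \<in> borel_measurable M" by measurable
    show "AE t in M. norm (indicator {0<..} t * min 1 (1 / (cmod w * t))) \<le> norm (1::real)"
      using AE0 by eventually_elim (use wpos in \<open>auto simp: indicator_def\<close>)
  qed
  have "(\<integral>t. Re (1 / (1 + w * complex_of_real t)) \<partial>M)
        \<le> (\<integral>t. indicator {0} t + indicator {0<..} t * min 1 (1 / (cmod w * t)) \<partial>M)"
  proof (rule integral_mono_AE)
    show "integrable M (\<lambda>t. Re (1 / (1 + w * complex_of_real t)))" using i1 by simp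
    show "integrable M (\<lambda>t. indicator {0::real} t + indicator {0<..} t * min 1 (1 / (cmod w * t)))"
      using ip i0 by simp
    show "AE t in M. Re (1 / (1 + w * complex_of_real t)) \<le> indicator {0} t + indicator {0<..} t * min 1 (1 / (cmod w * t))"
      using AE0
    proof eventually_elim
      fix t :: real assume t: "0 \<le> t"
      show "Re (1 / (1 + w * complex_of_real t)) \<le> indicator {0} t + indicator {0<..} t * min 1 (1 / (cmod w * t))"
      proof (cases "t = 0")
        case True thus ?thesis by simp
      next
        case False
        hence tp: "t > 0" using t by simp
        have a: "cmod w * t \<le> cmod (1 + w * complex_of_real t)" by (rule pt_norm_ge) (use w t in auto)
        have b: "1 \<le> cmod (1 + w * complex_of_real t)" by (rule pt_norm_ge1) (use w t in auto)
        have c: "cmod w * t > 0" using wpos tp by simp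
        have "Re (1 / (1 + w * complex_of_real t)) \<le> cmod (1 / (1 + w * complex_of_real t))"
          by (rule complex_Re_le_cmod)
        also have "\<dots> = 1 / cmod (1 + w * complex_of_real t)" by (simp add: norm_divide)
        also have "\<dots> \<le> min 1 (1 / (cmod w * t))"
          using a b c by (auto simp: divide_le_eq field_simps)
        finally show ?thesis using tp by simp
      qed
    qed
  qed
  also have "\<dots> = measure M {0} + psi M (cmod w)"
    unfolding psi_def using ip i0 by (subst Bochner_Integration.integral_add) (auto simp: sp)
  finally show "Re (\<integral>t. 1 / (1 + w * complex_of_real t) \<partial>M) \<le> measure M {0} + psi M (cmod w)"
    using ReI by simp
  fix R assume R: "cmod w \<le> R"
  have Rpos: "R > 0" using R wpos by linarith
  have "(\<integral>t. t / (1 + R * t)^2 \<partial>M) \<le> (\<integral>t. Re (complex_of_real t / (1 + w * complex_of_real t)) \<partial>M)"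
  proof (rule integral_mono_AE)
    show "integrable M (\<lambda>t. Re (complex_of_real t / (1 + w * complex_of_real t)))" using i2 by simp
    show "integrable M (\<lambda>t. t / (1 + R * t)^2)"
    proof (rule Bochner_Integration.integrable_bound[where f="\<lambda>_. 1 / R"])
      show "integrable M (\<lambda>_. 1 / R)" by simp
      show "(\<lambda>t. t / (1 + R * t)^2) \<in> borel_measurable M" by measurable
      show "AE t in M. norm (t / (1 + R * t)^2) \<le> norm (1 / R)"
        using AE0
      proof eventually_elim
        fix t :: real assume t: "0 \<le> t"
        have "R * t \<le> (1 + R * t)^2" using t Rpos by (simp add: power2_eq_square algebra_simps)
        moreover have "0 < (1 + R*t)^2" using t Rpos by (smt (verit) mult_nonneg_nonneg zero_less_power)
        ultimately show "norm (t / (1 + R * t)^2) \<le> norm (1 / R)"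
          using t Rpos by (simp add: divide_le_eq field_simps)
      qed
    qed
    show "AE t in M. t / (1 + R * t)^2 \<le> Re (complex_of_real t / (1 + w * complex_of_real t))"
      using AE0
    proof eventually_elim
      fix t :: real assume t: "0 \<le> t"
      have "t / (1 + R * t)^2 \<le> t / (1 + cmod w * t)^2"
      proof (rule divide_left_mono)
        show "(1 + cmod w * t)^2 \<le> (1 + R * t)^2"
          using R t by (intro power_mono) (auto intro: mult_right_mono)
        have "0 < 1 + cmod w * t" using t by (simp add: add_pos_nonneg)
        moreover have "0 < 1 + R * t" using t Rpos by (simp add: add_pos_nonneg)
        ultimately show "0 < (1 + R * t)^2 * (1 + cmod w * t)^2" by simp
      qed (use t in auto)
      also have "\<dots> \<le> Re (complex_of_real t / (1 + w * complex_of_real t))"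
        by (rule pt_Re_frac_ge) (use w t in auto)
      finally show "t / (1 + R * t)^2 \<le> Re (complex_of_real t / (1 + w * complex_of_real t))" .
    qed
  qed
  thus "(\<integral>t. t / (1 + R * t)^2 \<partial>M) \<le> Re (\<integral>t. complex_of_real t / (1 + w * complex_of_real t) \<partial>M)"
    using i2 by simp
qed

lemma psi_lim:
  assumes P: "prob_on_Rplus M"
  shows "(\<lambda>n. psi M (real n)) \<longlonglongrightarrow> 0"
proof -
  interpret prob_space M using P unfolding prob_on_Rplus_def by auto
  have s[measurable_cong]: "sets M = sets borel" using P unfolding prob_on_Rplus_def by auto
  have "(\<lambda>n. \<integral>t. indicator {0<..} t * min 1 (1 / (real n * t)) \<partial>M) \<longlonglongrightarrow> (\<integral>t. (0::real) \<partial>M)"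
  proof (rule integral_dominated_convergence[where w="\<lambda>_. 1"])
    show "(\<lambda>t. 0::real) \<in> borel_measurable M" by simp
    show "\<And>n. (\<lambda>t. indicator {0<..} t * min 1 (1 / (real n * t))) \<in> borel_measurable M" by measurable
    show "integrable M (\<lambda>_. 1::real)" by simp
    show "AE t in M. (\<lambda>n. indicator {0<..} t * min 1 (1 / (real n * t))) \<longlonglongrightarrow> 0"
    proof (rule AE_I2)
      fix t :: real
      show "(\<lambda>n. indicator {0<..} t * min 1 (1 / (real n * t))) \<longlonglongrightarrow> 0"
      proof (cases "t > 0")
        case False thus ?thesis by simp
      next
        case True
        have up: "(\<lambda>n. (1 / t) * (1 / real n)) \<longlonglongrightarrow> 0"
          using tendsto_mult_right_zero[OF lim_1_over_n, of "1/t"] by simp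
        show ?thesis
        proof (rule tendsto_sandwich[OF _ _ tendsto_const up])
          show "\<forall>\<^sub>F n in sequentially. 0 \<le> indicator {0<..} t * min 1 (1 / (real n * t))"
            using True by (auto simp: indicator_def)
          show "\<forall>\<^sub>F n in sequentially. indicator {0<..} t * min 1 (1 / (real n * t)) \<le> 1 / t * (1 / real n)"
            using True by (auto simp: indicator_def mult.commute min_le_iff_disj)
        qed
      qed
    qed
    show "AE t in M. norm (indicator {0<..} t * min 1 (1 / (real n * t))) \<le> 1" for n
      by (rule AE_I2) (auto simp: indicator_def)
  qed
  thus ?thesis unfolding psi_def by simp
qed

lemma psi_int:
  assumes P: "prob_on_Rplus M" and r0: "r \<ge> 0"
  shows "integrable M (\<lambda>t. indicator {0<..} t * min 1 (1 / (r * t)) :: real)"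
proof -
  interpret prob_space M using P unfolding prob_on_Rplus_def by auto
  have s[measurable_cong]: "sets M = sets borel" using P unfolding prob_on_Rplus_def by auto
  show ?thesis
  proof (rule Bochner_Integration.integrable_bound[where f="\<lambda>_. 1::real"])
    show "integrable M (\<lambda>_. 1::real)" by simp
    show "(\<lambda>t. indicator {0<..} t * min 1 (1 / (r * t)) :: real) \<in> borel_measurable M" by measurable
    show "AE t in M. norm (indicator {0<..} t * min 1 (1 / (r * t)) :: real) \<le> norm (1::real)"
      by (rule AE_I2) (use r0 in \<open>auto simp: indicator_def\<close>)
  qed
qed

lemma psi_anti:
  assumes P: "prob_on_Rplus M" and r: "0 < r1" "r1 \<le> r2"
  shows "psi M r2 \<le> psi M r1"
  unfolding psi_def
proof (rule integral_mono[OF psi_int[OF P] psi_int[OF P]])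
  show "0 \<le> r2" "0 \<le> r1" using r by auto
next
  fix t :: real
  show "indicator {0<..} t * min 1 (1 / (r2 * t)) \<le> indicator {0<..} t * min 1 (1 / (r1 * t))"
  proof (cases "t > 0")
    case True
    have "1 / (r2 * t) \<le> 1 / (r1 * t)" using True r
      by (intro divide_left_mono mult_right_mono mult_pos_pos) auto
    thus ?thesis using True by (auto simp: indicator_def)
  qed (simp add: indicator_def)
qed

lemma kappa_pos:
  assumes P: "prob_on_Rplus M" and nd: "M \<noteq> return borel 0" and R: "R > 0"
  shows "0 < (\<integral>t. t / (1 + R * t)^2 \<partial>M)"
proof -
  interpret prob_space M using P unfolding prob_on_Rplus_def by auto
  have s[measurable_cong]: "sets M = sets borel" using P unfolding prob_on_Rplus_def by auto
  have AE0: "AE t in M. t \<ge> 0" by (rule AE_Rplus[OF P])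
  have int: "integrable M (\<lambda>t. t / (1 + R * t)^2)"
  proof (rule Bochner_Integration.integrable_bound[where f="\<lambda>_. 1 / R"])
    show "integrable M (\<lambda>_. 1 / R)" by simp
    show "(\<lambda>t. t / (1 + R * t)^2) \<in> borel_measurable M" by measurable
    show "AE t in M. norm (t / (1 + R * t)^2) \<le> norm (1 / R)"
      using AE0
    proof eventually_elim
      fix t :: real assume t: "0 \<le> t"
      have "R * t \<le> (1 + R * t)^2" using t R by (simp add: power2_eq_square algebra_simps)
      moreover have "0 < (1 + R*t)^2" using t R by (smt (verit) mult_nonneg_nonneg zero_less_power)
      ultimately show "norm (t / (1 + R * t)^2) \<le> norm (1 / R)"
        using t R by (simp add: divide_le_eq field_simps)
    qed
  qed
  have nn: "AE t in M. 0 \<le> t / (1 + R * t)^2" using AE0 by eventually_elim simp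
  have ge: "0 \<le> (\<integral>t. t / (1 + R * t)^2 \<partial>M)" by (rule integral_nonneg_AE[OF nn])
  have "(\<integral>t. t / (1 + R * t)^2 \<partial>M) \<noteq> 0"
  proof
    assume "(\<integral>t. t / (1 + R * t)^2 \<partial>M) = 0"
    hence "AE t in M. t / (1 + R * t)^2 = 0" using integral_nonneg_eq_0_iff_AE[OF int nn] by simp
    hence "AE t in M. t = 0" using AE0
    proof eventually_elim
      fix t :: real assume "t / (1 + R * t)^2 = 0" "0 \<le> t"
      moreover have "(1 + R * t)^2 \<noteq> 0" using \<open>0 \<le> t\<close> R by (smt (verit) mult_nonneg_nonneg power_eq_0_iff)
      ultimately show "t = 0" by simp
    qed
    thus False using dirac_if_AE[OF P] nd by simp
  qed
  thus ?thesis using ge by simp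
qed

lemma inv_lim: "((\<lambda>s::real. 1 / s) \<longlongrightarrow> 0) at_top"
  by (rule tendsto_divide_0[OF tendsto_const filterlim_at_top_imp_at_infinity[OF filterlim_ident]])

lemma stieltjes_lim:
  assumes P: "prob_on_Rplus M"
  shows "((\<lambda>s. - (\<i> * of_real (1/s)) * stieltjes M (\<i> * of_real (1/s))) \<longlongrightarrow> complex_of_real (measure M {0})) at_top"
proof -
  interpret prob_space M using P unfolding prob_on_Rplus_def by auto
  have s[measurable_cong]: "sets M = sets borel" using P unfolding prob_on_Rplus_def by auto
  have sp: "space M = UNIV" using sets_eq_imp_space_eq[OF s] by simp
  define S where "S = (\<lambda>s (x::real). - (\<i> * of_real (1/s)) / (complex_of_real x - \<i> * of_real (1/s)))"
  have eq: "- (\<i> * of_real (1/s)) * stieltjes M (\<i> * of_real (1/s)) = integral\<^sup>L M (S s)" for s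
    unfolding stieltjes_def S_def
    by (subst integral_mult_right_zero[symmetric]) (simp add: field_simps)
  have "((\<lambda>s. integral\<^sup>L M (S s)) \<longlongrightarrow> integral\<^sup>L M (\<lambda>x. complex_of_real (indicator {0} x))) at_top"
  proof (rule integral_dominated_convergence_at_top[where w="\<lambda>_. 1"])
    show "(\<lambda>x. complex_of_real (indicator {0} x)) \<in> borel_measurable M" by measurable
    show "S t \<in> borel_measurable M" for t unfolding S_def by measurable
    show "integrable M (\<lambda>_. 1::real)" by simp
    show "AE x in M. ((\<lambda>i. S i x) \<longlongrightarrow> complex_of_real (indicator {0} x)) at_top"
    proof (rule AE_I2)
      fix x :: real
      show "((\<lambda>i. S i x) \<longlongrightarrow> complex_of_real (indicator {0} x)) at_top"
      proof (cases "x = 0")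
        case True
        have "\<forall>\<^sub>F i in at_top. S i x = 1"
          using eventually_gt_at_top[of "0::real"] by eventually_elim (simp add: S_def True)
        thus ?thesis using True by (simp add: tendsto_eventually)
      next
        case False
        have "((\<lambda>i. S i x) \<longlongrightarrow> - (\<i> * of_real 0) / (complex_of_real x - \<i> * of_real 0)) at_top"
          unfolding S_def using False by (intro tendsto_intros inv_lim) auto
        thus ?thesis using False by simp
      qed
    qed
    show "\<forall>\<^sub>F i in at_top. AE x in M. norm (S i x) \<le> 1"
      using eventually_gt_at_top[of "0::real"]
    proof eventually_elim
      fix i :: real assume i: "0 < i"
      show "AE x in M. norm (S i x) \<le> 1"
      proof (rule AE_I2)
        fix x :: real
        have a: "1/i \<le> cmod (complex_of_real x - \<i> * of_real (1/i))"
          using abs_Im_le_cmod[of "complex_of_real x - \<i> * of_real (1/i)"] i by simp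
        have "norm (S i x) = (1/i) / cmod (complex_of_real x - \<i> * of_real (1/i))"
          unfolding S_def using i by (simp add: norm_divide norm_mult)
        also have "\<dots> \<le> 1" using a i by (simp add: divide_le_eq mult.commute)
        finally show "norm (S i x) \<le> 1" .
      qed
    qed
  qed
  moreover have "integral\<^sup>L M (\<lambda>x. complex_of_real (indicator {0} x)) = complex_of_real (measure M {0})"
    by (simp add: sp)
  ultimately show ?thesis unfolding eq by simp
qed

lemma final_arith:
  fixes c m0 n1 n2 :: real
  assumes cpos: "c > 0" and h1: "n1 \<le> m0" and h2: "n2 \<le> 1 - c * (1 - m0)" and h3: "m0 \<le> n1 \<or> 1 - c * (1 - m0) \<le> n2"
  shows "m0 = 1 - min (1 - n1) ((1 - n2) / c)"
proof -
  have a: "1 - m0 \<le> 1 - n1" using h1 by simp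
  have b: "1 - m0 \<le> (1 - n2) / c" using h2 cpos by (simp add: le_divide_eq algebra_simps)
  have "1 - m0 = 1 - n1 \<or> 1 - m0 = (1 - n2) / c"
  proof (cases "m0 \<le> n1")
    case True thus ?thesis using h1 by simp
  next
    case False
    hence "c * (1 - m0) = 1 - n2" using h3 h2 by simp
    hence "1 - m0 = (1 - n2) / c" using cpos by (simp add: eq_divide_eq mult.commute)
    thus ?thesis by simp
  qed
  thus ?thesis using a b by (auto simp: min_def)
qed


theorem proposition2p2:
  fixes c :: real and \<nu> \<nu>' \<mu> :: "real measure" and \<delta> \<delta>' :: "complex \<Rightarrow> complex"
  assumes "c > 0"
    and "prob_on_Rplus \<nu>" and "prob_on_Rplus \<nu>'"
    and "\<nu> \<noteq> return borel 0" and "\<nu>' \<noteq> return borel 0"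
    and "solves_system c \<nu> \<nu>' \<delta> \<delta>'"
    and "prob_on_Rplus \<mu>"
    and "\<forall>z\<in>C_plus. m_fun \<nu> \<delta>' z = stieltjes \<mu> z"
  shows "measure \<mu> {0} = 1 - min (1 - measure \<nu> {0}) ((1 - measure \<nu>' {0}) / c)"
proof -
  note cpos = assms(1) and P1 = assms(2) and P2 = assms(3) and nd1 = assms(4)
  note sol = assms(6)[unfolded solves_system_def] and P3 = assms(7) and mst = assms(8)
  define z where "z s = \<i> * complex_of_real (1/s)" for s :: real
  define u where "u s = \<delta>' (z s)" for s
  define v where "v s = \<delta> (z s)" for s
  define f where "f s = (\<integral>t. 1 / (1 + u s * complex_of_real t) \<partial>\<nu>)" for s
  define g where "g s = (\<integral>t. 1 / (1 + v s * complex_of_real t) \<partial>\<nu>')" for s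
  define A where "A s = (\<integral>t. complex_of_real t / (1 + u s * complex_of_real t) \<partial>\<nu>)" for s
  define B where "B s = (\<integral>t. complex_of_real t / (1 + v s * complex_of_real t) \<partial>\<nu>')" for s
  define m0 where "m0 = measure \<mu> {0}"
  define n1 where "n1 = measure \<nu> {0}"
  define n2 where "n2 = measure \<nu>' {0}"
  have zC: "z s \<in> C_plus" if "s > 0" for s using that by (simp add: z_def C_plus_def)
  have zn: "z s \<noteq> 0" if "s > 0" for s using that by (simp add: z_def)
  have Imu: "Im (u s) > 0" and Imv: "Im (v s) > 0"
    and ve: "v s = complex_of_real c * (\<integral>t. complex_of_real t / (- z s * (1 + u s * complex_of_real t)) \<partial>\<nu>)"
    and ue: "u s = (\<integral>t. complex_of_real t / (- z s * (1 + v s * complex_of_real t)) \<partial>\<nu>')"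
    if "s > 0" for s
  proof -
    note S = bspec[OF sol zC[OF that]]
    have "\<delta>' (z s) \<in> C_plus" using S by blast
    thus "Im (u s) > 0" unfolding u_def C_plus_def by simp
    have "\<delta> (z s) \<in> C_plus" using S by blast
    thus "Im (v s) > 0" unfolding v_def C_plus_def by simp
    show "v s = complex_of_real c * (\<integral>t. complex_of_real t / (- z s * (1 + u s * complex_of_real t)) \<partial>\<nu>)"
      unfolding u_def v_def using S by blast
    show "u s = (\<integral>t. complex_of_real t / (- z s * (1 + v s * complex_of_real t)) \<partial>\<nu>')"
      unfolding u_def v_def using S by blast
  qed
  have Reu: "Re (u s) \<ge> 0" if s: "s > 0" for s
  proof -
    have "0 \<le> Re (\<integral>t. complex_of_real t / (- (\<i> * of_real (1/s)) * (1 + v s * complex_of_real t)) \<partial>\<nu>')"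
      by (rule Re_sys_nonneg[OF P2 Imv[OF s]]) (use s in simp)
    thus ?thesis using ue[OF s] by (simp add: z_def)
  qed
  have Rev: "Re (v s) \<ge> 0" if s: "s > 0" for s
  proof -
    have "0 \<le> Re (\<integral>t. complex_of_real t / (- (\<i> * of_real (1/s)) * (1 + u s * complex_of_real t)) \<partial>\<nu>)"
      (is "0 \<le> Re ?I") by (rule Re_sys_nonneg[OF P1 Imu[OF s]]) (use s in simp)
    moreover have "v s = complex_of_real c * ?I" using ve[OF s] unfolding z_def .
    hence "Re (v s) = c * Re ?I" by simp
    ultimately show ?thesis using cpos by (metis mult_nonneg_nonneg less_imp_le)
  qed
  have hA: "- z s * v s = complex_of_real c * A s" if s: "s > 0" for s
  proof -
    have m: "- z s * (\<integral>t. complex_of_real t / (- z s * (1 + u s * complex_of_real t)) \<partial>\<nu>) = A s"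
      unfolding A_def by (rule mult_out[OF zn[OF s]])
    have "- z s * v s = complex_of_real c * (- z s * (\<integral>t. complex_of_real t / (- z s * (1 + u s * complex_of_real t)) \<partial>\<nu>))"
      by (subst ve[OF s], rule mult.left_commute)
    also have "\<dots> = complex_of_real c * A s" by (simp only: m)
    finally show ?thesis .
  qed
  have hB: "- z s * u s = B s" if s: "s > 0" for s
    using ue[OF s] mult_out[OF zn[OF s]] unfolding B_def by simp
  have iA: "u s * A s = 1 - f s" if s: "s > 0" for s
    unfolding A_def f_def by (rule int_facts(3)[OF P1 Reu[OF s] Imu[OF s]])
  have iB: "v s * B s = 1 - g s" if s: "s > 0" for s
    unfolding B_def g_def by (rule int_facts(3)[OF P2 Rev[OF s] Imv[OF s]])
  have eqn: "complex_of_real c * (1 - f s) = 1 - g s" if s: "s > 0" for s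
  proof -
    have "complex_of_real c * (1 - f s) = u s * (complex_of_real c * A s)" using iA[OF s] by simp
    also have "\<dots> = u s * (- z s * v s)" using hA[OF s] by simp
    also have "\<dots> = v s * (- z s * u s)" by simp
    also have "\<dots> = 1 - g s" using hB[OF s] iB[OF s] by simp
    finally show ?thesis .
  qed
  have fm: "f s = - (\<i> * of_real (1/s)) * stieltjes \<mu> (\<i> * of_real (1/s))" if s: "s > 0" for s
  proof -
    have "m_fun \<nu> \<delta>' (z s) = stieltjes \<mu> (z s)" using mst zC[OF s] by blast
    moreover have "- z s * m_fun \<nu> \<delta>' (z s) = f s"
      unfolding m_fun_def f_def u_def
      using mult_out[OF zn[OF s], where g="\<lambda>_. 1" and h="\<lambda>t. 1 + \<delta>' (z s) * complex_of_real t" and M=\<nu>]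
      by simp
    ultimately show ?thesis by (simp add: z_def)
  qed
  have fl: "(f \<longlongrightarrow> complex_of_real m0) at_top"
    unfolding m0_def
  proof (rule Lim_transform_eventually[OF stieltjes_lim[OF P3]])
    show "\<forall>\<^sub>F s in at_top. - (\<i> * of_real (1/s)) * stieltjes \<mu> (\<i> * of_real (1/s)) = f s"
      using eventually_gt_at_top[of "0::real"] by eventually_elim (simp add: fm)
  qed
  have gl: "(g \<longlongrightarrow> 1 - complex_of_real c * (1 - complex_of_real m0)) at_top"
  proof (rule Lim_transform_eventually)
    show "((\<lambda>s. 1 - complex_of_real c * (1 - f s)) \<longlongrightarrow> 1 - complex_of_real c * (1 - complex_of_real m0)) at_top"
      by (intro tendsto_intros fl)
    show "\<forall>\<^sub>F s in at_top. 1 - complex_of_real c * (1 - f s) = g s"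
      using eventually_gt_at_top[of "0::real"] by eventually_elim (simp add: eqn)
  qed
  have Refl: "((\<lambda>s. Re (f s)) \<longlongrightarrow> m0) at_top" using tendsto_Re[OF fl] by simp
  have Regl: "((\<lambda>s. Re (g s)) \<longlongrightarrow> 1 - c * (1 - m0)) at_top" using tendsto_Re[OF gl] by simp
  have lowf: "\<forall>\<^sub>F s in at_top. n1 \<le> Re (f s)"
    using eventually_gt_at_top[of "0::real"]
    by eventually_elim (unfold f_def n1_def, rule int_facts(4)[OF P1 Reu Imu])
  have lowg: "\<forall>\<^sub>F s in at_top. n2 \<le> Re (g s)"
    using eventually_gt_at_top[of "0::real"]
    by eventually_elim (unfold g_def n2_def, rule int_facts(4)[OF P2 Rev Imv])
  have h1: "n1 \<le> m0" by (rule tendsto_lowerbound[OF Refl lowf]) simp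
  have h2: "n2 \<le> 1 - c * (1 - m0)" by (rule tendsto_lowerbound[OF Regl lowg]) simp
  have h3: "m0 \<le> n1 \<or> 1 - c * (1 - m0) \<le> n2"
  proof (rule ccontr)
    assume "\<not> ?thesis"
    hence a1: "n1 < m0" and a2: "n2 < 1 - c * (1 - m0)" by auto
    define \<alpha> where "\<alpha> = (m0 - n1) / 2"
    define \<beta> where "\<beta> = (1 - c * (1 - m0) - n2) / 2"
    have \<alpha>: "\<alpha> > 0" and \<beta>: "\<beta> > 0" using a1 a2 by (auto simp: \<alpha>_def \<beta>_def)
    have ef: "\<forall>\<^sub>F s in at_top. n1 + \<alpha> < Re (f s)"
      by (rule order_tendstoD(1)[OF Refl]) (use a1 in \<open>simp add: \<alpha>_def field_simps\<close>)
    have eg: "\<forall>\<^sub>F s in at_top. n2 + \<beta> < Re (g s)"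
      by (rule order_tendstoD(1)[OF Regl]) (use a2 in \<open>simp add: \<beta>_def field_simps\<close>)
    obtain N1 :: real where N1: "N1 > 0" "psi \<nu> N1 < \<alpha>"
    proof -
      have "\<forall>\<^sub>F n in sequentially. psi \<nu> (real n) < \<alpha>"
        by (rule order_tendstoD(2)[OF psi_lim[OF P1] \<alpha>])
      then obtain N where NN: "\<And>n. n \<ge> N \<Longrightarrow> psi \<nu> (real n) < \<alpha>"
        unfolding eventually_sequentially by blast
      have "psi \<nu> (real (Suc N)) < \<alpha>" by (rule NN) simp
      thus ?thesis using that[of "real (Suc N)"] by simp
    qed
    obtain N2 :: real where N2: "N2 > 0" "psi \<nu>' N2 < \<beta>"
    proof -
      have "\<forall>\<^sub>F n in sequentially. psi \<nu>' (real n) < \<beta>"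
        by (rule order_tendstoD(2)[OF psi_lim[OF P2] \<beta>])
      then obtain N where NN: "\<And>n. n \<ge> N \<Longrightarrow> psi \<nu>' (real n) < \<beta>"
        unfolding eventually_sequentially by blast
      have "psi \<nu>' (real (Suc N)) < \<beta>" by (rule NN) simp
      thus ?thesis using that[of "real (Suc N)"] by simp
    qed
    define \<kappa> where "\<kappa> = (\<integral>t. t / (1 + N1 * t)^2 \<partial>\<nu>)"
    have \<kappa>: "\<kappa> > 0" unfolding \<kappa>_def by (rule kappa_pos[OF P1 nd1 N1(1)])
    have bu: "\<forall>\<^sub>F s in at_top. cmod (u s) < N1"
      using eventually_gt_at_top[of "0::real"] ef
    proof eventually_elim
      fix s :: real assume s: "0 < s" and r: "n1 + \<alpha> < Re (f s)"
      show "cmod (u s) < N1"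
      proof (rule ccontr)
        assume "\<not> cmod (u s) < N1"
        hence "psi \<nu> (cmod (u s)) \<le> psi \<nu> N1" by (intro psi_anti[OF P1 N1(1)]) simp
        moreover have "Re (f s) \<le> n1 + psi \<nu> (cmod (u s))"
          unfolding f_def n1_def by (rule int_facts(5)[OF P1 Reu[OF s] Imu[OF s]])
        ultimately show False using r N1(2) by simp
      qed
    qed
    have bv: "\<forall>\<^sub>F s in at_top. cmod (v s) < N2"
      using eventually_gt_at_top[of "0::real"] eg
    proof eventually_elim
      fix s :: real assume s: "0 < s" and r: "n2 + \<beta> < Re (g s)"
      show "cmod (v s) < N2"
      proof (rule ccontr)
        assume "\<not> cmod (v s) < N2"
        hence "psi \<nu>' (cmod (v s)) \<le> psi \<nu>' N2" by (intro psi_anti[OF P2 N2(1)]) simp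
        moreover have "Re (g s) \<le> n2 + psi \<nu>' (cmod (v s))"
          unfolding g_def n2_def by (rule int_facts(5)[OF P2 Rev[OF s] Imv[OF s]])
        ultimately show False using r N2(2) by simp
      qed
    qed
    have "\<forall>\<^sub>F s in at_top. s < (s::real)"
      using eventually_gt_at_top[of "N2 / (c * \<kappa>)"] eventually_gt_at_top[of "0::real"] bu bv
    proof eventually_elim
      fix s :: real assume sb: "N2 / (c * \<kappa>) < s" and s: "0 < s"
        and u1: "cmod (u s) < N1" and v1: "cmod (v s) < N2"
      have "c * \<kappa> \<le> c * Re (A s)"
        using int_facts(6)[OF P1 Reu[OF s] Imu[OF s], of N1] u1 cpos
        unfolding \<kappa>_def A_def by simp
      also have "\<dots> = Re (- z s * v s)" using hA[OF s] by simp
      also have "\<dots> = (1/s) * Im (v s)" by (simp add: z_def)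
      also have "\<dots> \<le> (1/s) * cmod (v s)"
        using s abs_Im_le_cmod[of "v s"] by (intro mult_left_mono) auto
      also have "\<dots> < (1/s) * N2" using s v1 by (intro mult_strict_left_mono) auto
      finally have "c * \<kappa> < N2 / s" by simp
      moreover have "N2 / s < c * \<kappa>" using sb s cpos \<kappa> by (simp add: field_simps)
      ultimately show "s < s" by simp
    qed
    thus False by simp
  qed
  show ?thesis using final_arith[OF cpos h1 h2 h3] unfolding m0_def n1_def n2_def .
qed

end
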